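(* Let $G$ be a multigraph with unit edge capacities and terminal set ${\mathcal T}\subseteq V(G)$. If $G'$ is a legal contracted graph for $G$, then $G'$ is a quality-$68$ restricted flow sparsifier for $G$.
   Context: For $S\subseteq V$, $\operatorname{out}(S)$ is the set of edges with exactly one endpoint in $S$. $S$ is $\alpha$-well-linked if for every partition $(A,B)$ of $S$, with $T_A=\operatorname{out}(A)\cap\operatorname{out}(S)$, $T_B=\operatorname{out}(B)\cap\operatorname{out}(S)$, $|E(A,B)|\geq\alpha\min\{|T_A|,|T_B|\}$. A flow between edges of $\operatorname{out}(S)$ is contained in $S$ if every flow path has its first and last edge in $\operatorname{out}(S)$ and all other edges in $G[S]$. A set $S\subseteq V\setminus{\mathcal T}$ with $|\operatorname{out}(S)|=z$ is a good router if $S$ is $1/3$-well-linked and every pair of edges $e,e'\in\operatorname{out}(S)$ can simultaneously send $1/z$ flow units to each other by a flow contained in $S$ with congestion at most $34$. $G'$ is a legal contracted graph for $G$ if there is a collection ${\mathcal C}$ of disjoint good routers (containing no terminals) such that $G'$ is obtained from $G$ by contracting each $S\in{\mathcal C}$ into a single vertex (self-loops removed, parallel edges kept). For a demand set $D$ over ${\mathcal T}$ (a nonnegative demand $D(t,t')$ per unordered terminal pair), $\eta(G,D)$ is the minimum congestion of a fractional multicommodity flow in which each pair $t,t'$ exchanges $D(t,t')$ units. $H$ is a quality-$q$ flow sparsifier if ${\mathcal T}\subseteq V(H)$ and $\eta(H,D)\leq\eta(G,D)\leq q\,\eta(H,D)$ for all $D$; it is restricted if it is obtained from $G$ by contracting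 disjoint sets of non-terminal vertices. *)

theory Defs
  imports Complex_Main "HOL-Library.Extended_Nonnegative_Real"
begin

(* A finite undirected multigraph: vertex set V, edge set E (edge identities of
   type 'e, so parallel edges are distinct edges), endpoint map ep; edge e joins
   fst (ep e) and snd (ep e).  Every edge has unit capacity. *)
definition multigraph :: "'v set \<Rightarrow> 'e set \<Rightarrow> ('e \<Rightarrow> 'v \<times> 'v) \<Rightarrow> bool" where
  "multigraph V E ep \<longleftrightarrow> finite V \<and> finite E \<and>
     (\<forall>e\<in>E. fst (ep e) \<in> V \<and> snd (ep e) \<in> V)"

definition out_edges :: "'e set \<Rightarrow> ('e \<Rightarrow> 'v \<times> 'v) \<Rightarrow> 'v set \<Rightarrow> 'e set" where
  "out_edges E ep S = {e \<in> E. (fst (ep e) \<in> S) \<noteq> (snd (ep e) \<in> S)}"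

definition edges_between :: "'e set \<Rightarrow> ('e \<Rightarrow> 'v \<times> 'v) \<Rightarrow> 'v set \<Rightarrow> 'v set \<Rightarrow> 'e set" where
  "edges_between E ep A B = {e \<in> E. (fst (ep e) \<in> A \<and> snd (ep e) \<in> B) \<or>
                                       (fst (ep e) \<in> B \<and> snd (ep e) \<in> A)}"

definition inner_edges :: "'e set \<Rightarrow> ('e \<Rightarrow> 'v \<times> 'v) \<Rightarrow> 'v set \<Rightarrow> 'e set" where
  "inner_edges E ep S = {e \<in> E. fst (ep e) \<in> S \<and> snd (ep e) \<in> S}"

definition well_linked :: "real \<Rightarrow> 'e set \<Rightarrow> ('e \<Rightarrow> 'v \<times> 'v) \<Rightarrow> 'v set \<Rightarrow> bool" where
  "well_linked \<alpha> E ep S \<longleftrightarrow>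
    (\<forall>A B. A \<union> B = S \<and> A \<inter> B = {} \<longrightarrow>
       real (card (edges_between E ep A B)) \<ge>
         \<alpha> * min (real (card (out_edges E ep A \<inter> out_edges E ep S)))
                 (real (card (out_edges E ep B \<inter> out_edges E ep S))))"

(* A flow on a set of edges: g e True is the amount sent along e from fst (ep e)
   to snd (ep e), g e False the amount sent in the opposite direction.
   netout is the net amount leaving vertex v. *)
definition netout :: "'e set \<Rightarrow> ('e \<Rightarrow> 'v \<times> 'v) \<Rightarrow> ('e \<Rightarrow> bool \<Rightarrow> real) \<Rightarrow> 'v \<Rightarrow> real" where
  "netout F ep g v =
     (\<Sum>e\<in>{e\<in>F. fst (ep e) = v}. g e True - g e False) +
     (\<Sum>e\<in>{e\<in>F. snd (ep e) = v}. g e False - g e True)"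

definition inside_end :: "('e \<Rightarrow> 'v \<times> 'v) \<Rightarrow> 'v set \<Rightarrow> 'e \<Rightarrow> 'v" where
  "inside_end ep S e = (if fst (ep e) \<in> S then fst (ep e) else snd (ep e))"

(* Every pair of distinct edges e, e' of out(S) simultaneously exchanges 1/z
   flow units (z = |out(S)|) by a flow contained in S (first and last edge
   e, e', all other edges in G[S]), with total congestion at most c.
   Commodity {a,b}: flow g {a,b} on the edges of G[S] from the inside endpoint
   of a to that of b; each of a, b additionally carries the 1/z units. *)
definition router_flow :: "real \<Rightarrow> 'e set \<Rightarrow> ('e \<Rightarrow> 'v \<times> 'v) \<Rightarrow> 'v set \<Rightarrow> bool" where
  "router_flow c E ep S \<longleftrightarrow>
    (let Out = out_edges E ep S; z = real (card Out); I = inner_edges E ep S;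
         P = {p. p \<subseteq> Out \<and> card p = 2} in
     \<exists>g :: 'e set \<Rightarrow> 'e \<Rightarrow> bool \<Rightarrow> real.
       (\<forall>p\<in>P. \<forall>e\<in>I. \<forall>d. g p e d \<ge> 0) \<and>
       (\<forall>p\<in>P. \<exists>a b. p = {a, b} \<and> a \<noteq> b \<and>
           (\<forall>v\<in>S. netout I ep (g p) v =
               (if v = inside_end ep S a then 1 / z else 0) -
               (if v = inside_end ep S b then 1 / z else 0))) \<and>
       (\<forall>e\<in>I. (\<Sum>p\<in>P. g p e True + g p e False) \<le> c) \<and>
       (\<forall>e\<in>Out. (\<Sum>p\<in>{p\<in>P. e \<in> p}. 1 / z) \<le> c))"

definition good_router :: "'v set \<Rightarrow> 'e set \<Rightarrow> ('e \<Rightarrow> 'v \<times> 'v) \<Rightarrow> 'v set \<Rightarrow> 'v set \<Rightarrow> bool" where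
  "good_router V E ep T S \<longleftrightarrow> S \<subseteq> V - T \<and> well_linked (1/3) E ep S \<and> router_flow 34 E ep S"

definition cls :: "'v set set \<Rightarrow> 'v \<Rightarrow> 'v set" where
  "cls C v = (if \<exists>S\<in>C. v \<in> S then (THE S. S \<in> C \<and> v \<in> S) else {v})"

definition contr_V :: "'v set set \<Rightarrow> 'v set \<Rightarrow> 'v set set" where
  "contr_V C V = cls C ` V"

(* self-loops removed, parallel edges kept *)
definition contr_E :: "'v set set \<Rightarrow> 'e set \<Rightarrow> ('e \<Rightarrow> 'v \<times> 'v) \<Rightarrow> 'e set" where
  "contr_E C E ep = {e \<in> E. cls C (fst (ep e)) \<noteq> cls C (snd (ep e))}"

definition contr_ep :: "'v set set \<Rightarrow> ('e \<Rightarrow> 'v \<times> 'v) \<Rightarrow> 'e \<Rightarrow> 'v set \<times> 'v set" where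
  "contr_ep C ep e = (cls C (fst (ep e)), cls C (snd (ep e)))"

definition pairwise_disjoint :: "'v set set \<Rightarrow> bool" where
  "pairwise_disjoint C \<longleftrightarrow> (\<forall>S\<in>C. \<forall>S'\<in>C. S \<noteq> S' \<longrightarrow> S \<inter> S' = {})"

definition legal_contracted :: "'v set \<Rightarrow> 'e set \<Rightarrow> ('e \<Rightarrow> 'v \<times> 'v) \<Rightarrow> 'v set \<Rightarrow>
    'v set set \<Rightarrow> 'e set \<Rightarrow> ('e \<Rightarrow> 'v set \<times> 'v set) \<Rightarrow> bool" where
  "legal_contracted V E ep T V' E' ep' \<longleftrightarrow>
    (\<exists>C. pairwise_disjoint C \<and> (\<forall>S\<in>C. good_router V E ep T S) \<and>
         V' = contr_V C V \<and> E' = contr_E C E ep \<and> (\<forall>e\<in>E'. ep' e = contr_ep C ep e))"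

(* A demand set D assigns D p \<ge> 0 to each unordered pair
   p = {t,t'} of distinct terminals.  The terminal t sits at vertex \<iota> t of the
   graph (V,E,ep).  routable: every pair exchanges D p units, with edge loads
   (unit capacities) at most c. *)
definition routable :: "'w set \<Rightarrow> 'e set \<Rightarrow> ('e \<Rightarrow> 'w \<times> 'w) \<Rightarrow> 'v set \<Rightarrow> ('v \<Rightarrow> 'w) \<Rightarrow>
    ('v set \<Rightarrow> real) \<Rightarrow> real \<Rightarrow> bool" where
  "routable V E ep T \<iota> D c \<longleftrightarrow>
    (let P = {p. p \<subseteq> T \<and> card p = 2} in
     \<exists>g :: 'v set \<Rightarrow> 'e \<Rightarrow> bool \<Rightarrow> real.
       (\<forall>p\<in>P. \<forall>e\<in>E. \<forall>d. g p e d \<ge> 0) \<and>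
       (\<forall>p\<in>P. \<exists>a b. p = {a, b} \<and> a \<noteq> b \<and>
           (\<forall>v\<in>V. netout E ep (g p) v =
               (if v = \<iota> a then D p else 0) - (if v = \<iota> b then D p else 0))) \<and>
       (\<forall>e\<in>E. (\<Sum>p\<in>P. g p e True + g p e False) \<le> c))"

(* eta: minimum congestion (infinity if the demands cannot be routed at all) *)
definition eta :: "'w set \<Rightarrow> 'e set \<Rightarrow> ('e \<Rightarrow> 'w \<times> 'w) \<Rightarrow> 'v set \<Rightarrow> ('v \<Rightarrow> 'w) \<Rightarrow>
    ('v set \<Rightarrow> real) \<Rightarrow> ennreal" where
  "eta V E ep T \<iota> D = (INF c \<in> {c. c \<ge> 0 \<and> routable V E ep T \<iota> D c}. ennreal c)"

definition flow_sparsifier :: "'v set \<Rightarrow> 'e set \<Rightarrow> ('e \<Rightarrow> 'v \<times> 'v) \<Rightarrow> 'v set \<Rightarrow>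
    'w set \<Rightarrow> 'f set \<Rightarrow> ('f \<Rightarrow> 'w \<times> 'w) \<Rightarrow> ('v \<Rightarrow> 'w) \<Rightarrow> ennreal \<Rightarrow> bool" where
  "flow_sparsifier V E ep T VH EH epH \<iota> q \<longleftrightarrow>
    inj_on \<iota> T \<and> \<iota> ` T \<subseteq> VH \<and>
    (\<forall>D. (\<forall>p. D p \<ge> 0) \<longrightarrow>
       eta VH EH epH T \<iota> D \<le> eta V E ep T id D \<and>
       eta V E ep T id D \<le> q * eta VH EH epH T \<iota> D)"

(* restricted: H arises from G by contracting disjoint sets of non-terminals;
   terminals t of G are the vertices {t} of H *)
definition restricted_flow_sparsifier :: "'v set \<Rightarrow> 'e set \<Rightarrow> ('e \<Rightarrow> 'v \<times> 'v) \<Rightarrow> 'v set \<Rightarrow>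
    'v set set \<Rightarrow> 'e set \<Rightarrow> ('e \<Rightarrow> 'v set \<times> 'v set) \<Rightarrow> ennreal \<Rightarrow> bool" where
  "restricted_flow_sparsifier V E ep T VH EH epH q \<longleftrightarrow>
    (\<exists>C. pairwise_disjoint C \<and> (\<forall>S\<in>C. S \<subseteq> V - T) \<and>
         VH = contr_V C V \<and> EH = contr_E C E ep \<and> (\<forall>e\<in>EH. epH e = contr_ep C ep e) \<and>
         flow_sparsifier V E ep T VH EH epH (cls C) q)"

end

theory Submission
  imports Defs
begin

definition inc :: "('e \<Rightarrow> 'v \<times> 'v) \<Rightarrow> 'v \<Rightarrow> 'e \<Rightarrow> real" where
  "inc ep v e = (if fst (ep e) = v then 1 else 0) - (if snd (ep e) = v then 1 else 0)"

definition phi :: "('e \<Rightarrow> bool \<Rightarrow> real) \<Rightarrow> 'e \<Rightarrow> real" where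
  "phi g e = g e True - g e False"

lemma netout_alt:
  assumes "finite F"
  shows "netout F ep g v = (\<Sum>e\<in>F. phi g e * inc ep v e)"
proof -
  have "netout F ep g v = (\<Sum>e\<in>F. if fst (ep e) = v then g e True - g e False else 0) +
       (\<Sum>e\<in>F. if snd (ep e) = v then g e False - g e True else 0)"
    unfolding netout_def using assms by (simp add: sum.inter_filter)
  also have "\<dots> = (\<Sum>e\<in>F. phi g e * inc ep v e)"
    by (subst sum.distrib[symmetric]) (auto intro!: sum.cong simp: phi_def inc_def algebra_simps)
  finally show ?thesis .
qed

lemma netout_contract:
  fixes \<pi> :: "'v \<Rightarrow> 'w"
  assumes fin: "finite E" and ends: "\<forall>e\<in>E. fst (ep e) \<in> V \<and> snd (ep e) \<in> V"
    and sub: "E' \<subseteq> E" and loops: "\<forall>e\<in>E-E'. \<pi> (fst (ep e)) = \<pi> (snd (ep e))"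
    and epH: "\<forall>e\<in>E'. epH e = (\<pi> (fst (ep e)), \<pi> (snd (ep e)))"
    and finV: "finite V"
  shows "netout E' epH h W = (\<Sum>v\<in>{v\<in>V. \<pi> v = W}. netout E ep h v)"
proof -
  let ?VW = "{v\<in>V. \<pi> v = W}"
  let ?pe = "\<lambda>e. (\<pi> (fst (ep e)), \<pi> (snd (ep e)))"
  have finE': "finite E'" using fin sub finite_subset by blast
  have "netout E' epH h W = (\<Sum>e\<in>E'. phi h e * inc ?pe W e)"
    unfolding netout_alt[OF finE'] by (rule sum.cong) (use epH in \<open>auto simp: inc_def\<close>)
  also have "\<dots> = (\<Sum>e\<in>E. phi h e * inc ?pe W e)"
    by (rule sum.mono_neutral_left[OF fin sub]) (use loops in \<open>simp add: inc_def\<close>)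
  also have "\<dots> = (\<Sum>e\<in>E. phi h e * (\<Sum>v\<in>?VW. inc ep v e))"
  proof (rule sum.cong[OF refl])
    fix e assume e: "e \<in> E"
    have fV: "finite ?VW" using finV by simp
    have "(\<Sum>v\<in>?VW. inc ep v e) = (\<Sum>v\<in>?VW. if fst (ep e) = v then 1 else 0) -
        (\<Sum>v\<in>?VW. if snd (ep e) = v then 1 else 0)"
      unfolding inc_def by (rule sum_subtractf)
    also have "\<dots> = inc ?pe W e"
      using fV e ends by (simp add: inc_def)
    finally show "phi h e * inc ?pe W e = phi h e * (\<Sum>v\<in>?VW. inc ep v e)" by simp
  qed
  also have "\<dots> = (\<Sum>v\<in>?VW. \<Sum>e\<in>E. phi h e * inc ep v e)"
    by (simp add: sum_distrib_left sum.swap[of _ E])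
  also have "\<dots> = (\<Sum>v\<in>?VW. netout E ep h v)"
    by (simp add: netout_alt[OF fin])
  finally show ?thesis .
qed

lemma routable_contract:
  fixes \<pi> :: "'v \<Rightarrow> 'w"
  assumes fin: "finite E" and ends: "\<forall>e\<in>E. fst (ep e) \<in> V \<and> snd (ep e) \<in> V"
    and sub: "E' \<subseteq> E" and loops: "\<forall>e\<in>E-E'. \<pi> (fst (ep e)) = \<pi> (snd (ep e))"
    and epH: "\<forall>e\<in>E'. epH e = (\<pi> (fst (ep e)), \<pi> (snd (ep e)))"
    and finV: "finite V" and TV: "T \<subseteq> V"
    and r: "routable V E ep T id D c"
  shows "routable (\<pi> ` V) E' epH T \<pi> D c"
proof -
  let ?P = "{p. p \<subseteq> T \<and> card p = 2}"
  obtain g where g0: "\<forall>p\<in>?P. \<forall>e\<in>E. \<forall>d. g p e d \<ge> 0"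
    and g1: "\<forall>p\<in>?P. \<exists>a b. p = {a, b} \<and> a \<noteq> b \<and>
           (\<forall>v\<in>V. netout E ep (g p) v =
               (if v = id a then D p else 0) - (if v = id b then D p else 0))"
    and g2: "\<forall>e\<in>E. (\<Sum>p\<in>?P. g p e True + g p e False) \<le> c"
    using r unfolding routable_def Let_def by blast
  have "\<forall>p\<in>?P. \<exists>a b. p = {a, b} \<and> a \<noteq> b \<and>
           (\<forall>W\<in>\<pi> ` V. netout E' epH (g p) W =
               (if W = \<pi> a then D p else 0) - (if W = \<pi> b then D p else 0))"
  proof
    fix p assume p: "p \<in> ?P"
    then obtain a b where ab: "p = {a, b}" "a \<noteq> b" and
      nv: "\<forall>v\<in>V. netout E ep (g p) v =
               (if v = a then D p else 0) - (if v = b then D p else 0)"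
      using g1 by auto
    have aV: "a \<in> V" "b \<in> V" using p ab TV by auto
    have "\<forall>W\<in>\<pi> ` V. netout E' epH (g p) W =
               (if W = \<pi> a then D p else 0) - (if W = \<pi> b then D p else 0)"
    proof
      fix W assume "W \<in> \<pi> ` V"
      have "netout E' epH (g p) W = (\<Sum>v\<in>{v\<in>V. \<pi> v = W}. netout E ep (g p) v)"
        by (rule netout_contract[OF fin ends sub loops epH finV])
      also have "\<dots> = (\<Sum>v\<in>{v\<in>V. \<pi> v = W}. (if a = v then D p else 0) - (if b = v then D p else 0))"
        using nv by (intro sum.cong) auto
      also have "\<dots> = (if W = \<pi> a then D p else 0) - (if W = \<pi> b then D p else 0)"
        using finV aV by (simp add: sum_subtractf)
      finally show "netout E' epH (g p) W =
               (if W = \<pi> a then D p else 0) - (if W = \<pi> b then D p else 0)" .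
    qed
    then show "\<exists>a b. p = {a, b} \<and> a \<noteq> b \<and>
           (\<forall>W\<in>\<pi> ` V. netout E' epH (g p) W =
               (if W = \<pi> a then D p else 0) - (if W = \<pi> b then D p else 0))"
      using ab by blast
  qed
  then show ?thesis unfolding routable_def Let_def
    using g0 g2 sub by (intro exI[of _ g]) auto
qed

lemma pair_sum:
  fixes Out :: "'e set" and f y :: "'e \<Rightarrow> real"
  assumes fin: "finite Out" and bal: "(\<Sum>x\<in>Out. f x) = 0"
    and AB: "\<forall>q\<in>{q. q \<subseteq> Out \<and> card q = 2}. q = {A q, B q} \<and> A q \<noteq> B q"
  shows "(\<Sum>q\<in>{q. q \<subseteq> Out \<and> card q = 2}. (f (B q) - f (A q)) * (y (A q) - y (B q)))
         = - real (card Out) * (\<Sum>x\<in>Out. f x * y x)"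
proof -
  let ?PP = "{q. q \<subseteq> Out \<and> card q = 2}"
  let ?F = "\<lambda>q x. ((\<Sum>u\<in>q-{x}. f u) - f x) * y x"
  have finPP: "finite ?PP" using fin by simp
  have s1: "(\<Sum>q\<in>?PP. (f (B q) - f (A q)) * (y (A q) - y (B q))) = (\<Sum>q\<in>?PP. \<Sum>x\<in>q. ?F q x)"
  proof (rule sum.cong[OF refl])
    fix q assume q: "q \<in> ?PP"
    then have e: "q = {A q, B q}" "A q \<noteq> B q" using AB by auto
    have "(\<Sum>x\<in>q. ?F q x) = ?F q (A q) + ?F q (B q)"
      by (subst e(1)) (simp add: e(2))
    also have "q - {A q} = {B q}" "q - {B q} = {A q}" using e by auto
    ultimately show "(f (B q) - f (A q)) * (y (A q) - y (B q)) = (\<Sum>x\<in>q. ?F q x)"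
      by (simp add: algebra_simps)
  qed
  have s2: "(\<Sum>q\<in>?PP. \<Sum>x\<in>q. ?F q x) = (\<Sum>x\<in>Out. \<Sum>q\<in>{q\<in>?PP. x \<in> q}. ?F q x)"
  proof -
    have "(\<Sum>q\<in>?PP. \<Sum>x\<in>q. ?F q x) = (\<Sum>q\<in>?PP. \<Sum>x\<in>{x\<in>Out. x \<in> q}. ?F q x)"
      by (rule sum.cong[OF refl]) (rule sum.cong, auto)
    also have "\<dots> = (\<Sum>x\<in>Out. \<Sum>q\<in>{q\<in>?PP. x \<in> q}. ?F q x)"
      by (rule sum.swap_restrict[OF finPP fin])
    finally show ?thesis .
  qed
  have s3: "(\<Sum>q\<in>{q\<in>?PP. x \<in> q}. ?F q x) = - real (card Out) * (f x * y x)" if x: "x \<in> Out" for x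
  proof -
    have "card Out \<noteq> 0" using fin x by auto
    then have cpos: "card Out \<ge> 1" by simp
    have bij: "bij_betw (\<lambda>u. {x, u}) (Out - {x}) {q\<in>?PP. x \<in> q}"
    proof (rule bij_betwI')
      fix u u' assume "u \<in> Out - {x}" "u' \<in> Out - {x}"
      then show "({x, u} = {x, u'}) = (u = u')" by (auto simp: doubleton_eq_iff)
    next
      fix u assume "u \<in> Out - {x}" then show "{x, u} \<in> {q\<in>?PP. x \<in> q}" using x by auto
    next
      fix q assume "q \<in> {q\<in>?PP. x \<in> q}"
      then have q: "q \<subseteq> Out" "card q = 2" "x \<in> q" by auto
      then obtain a b where ab: "q = {a, b}" "a \<noteq> b" by (auto simp: card_2_iff)
      show "\<exists>u\<in>Out - {x}. q = {x, u}"
      proof (cases "a = x")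
        case True then show ?thesis using ab q by (intro bexI[of _ b]) auto
      next
        case False then have "b = x" using ab q by auto
        then show ?thesis using ab q False by (intro bexI[of _ a]) auto
      qed
    qed
    have "(\<Sum>q\<in>{q\<in>?PP. x \<in> q}. ?F q x) = (\<Sum>u\<in>Out-{x}. ?F {x,u} x)"
      by (rule sum.reindex_bij_betw[OF bij, symmetric])
    also have "\<dots> = (\<Sum>u\<in>Out-{x}. (f u - f x) * y x)"
    proof (rule sum.cong[OF refl])
      fix u assume "u \<in> Out - {x}"
      then have "{x,u} - {x} = {u}" by auto
      then show "?F {x,u} x = (f u - f x) * y x" by simp
    qed
    also have "\<dots> = ((\<Sum>u\<in>Out-{x}. f u) - real (card (Out - {x})) * f x) * y x"
      by (simp add: sum_distrib_right[symmetric] sum_subtractf)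
    also have "(\<Sum>u\<in>Out-{x}. f u) = - f x"
      using sum.remove[OF fin x, of f] bal by simp
    also have "real (card (Out - {x})) = real (card Out) - 1"
      using fin x cpos by (simp add: card_Diff_singleton of_nat_diff)
    finally show ?thesis by (simp add: algebra_simps)
  qed
  have "(\<Sum>x\<in>Out. \<Sum>q\<in>{q\<in>?PP. x \<in> q}. ?F q x) = (\<Sum>x\<in>Out. - real (card Out) * (f x * y x))"
    using s3 by (rule sum.cong[OF refl])
  also have "\<dots> = - real (card Out) * (\<Sum>x\<in>Out. f x * y x)"
    by (simp add: sum_distrib_left)
  finally show ?thesis using s1 s2 by simp
qed

lemma max_neg_diff: "max (k::real) 0 * a + max (-k) 0 * b - (max k 0 * b + max (-k) 0 * a) = k * (a - b)"
  by (cases "k \<ge> 0") (auto simp: max_def algebra_simps)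
lemma max_neg_sum: "max (k::real) 0 * a + max (-k) 0 * b + (max k 0 * b + max (-k) 0 * a) = \<bar>k\<bar> * (a + b)"
  by (cases "k \<ge> 0") (auto simp: max_def algebra_simps)

lemma router_reroute:
  fixes E :: "'e set" and ep :: "'e \<Rightarrow> 'v \<times> 'v" and S :: "'v set" and P :: "'p set"
    and w :: "'p \<Rightarrow> 'e \<Rightarrow> real"
  assumes fin: "finite E" and finP: "finite P" and rf: "router_flow 34 E ep S" and c0: "c \<ge> 0"
    and bal: "\<forall>p\<in>P. (\<Sum>e\<in>out_edges E ep S. w p e) = 0"
    and cap: "\<forall>e\<in>out_edges E ep S. (\<Sum>p\<in>P. \<bar>w p e\<bar>) \<le> c"
  shows "\<exists>R :: 'p \<Rightarrow> 'e \<Rightarrow> bool \<Rightarrow> real.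
     (\<forall>p\<in>P. \<forall>e\<in>inner_edges E ep S. \<forall>d. R p e d \<ge> 0) \<and>
     (\<forall>p\<in>P. \<forall>v\<in>S. netout (inner_edges E ep S) ep (R p) v =
          - (\<Sum>e\<in>{e\<in>out_edges E ep S. inside_end ep S e = v}. w p e)) \<and>
     (\<forall>e\<in>inner_edges E ep S. (\<Sum>p\<in>P. R p e True + R p e False) \<le> 68 * c)"
proof -
  define Out where "Out = out_edges E ep S"
  define I where "I = inner_edges E ep S"
  define PP where "PP = {q. q \<subseteq> Out \<and> card q = 2}"
  define z where "z = real (card Out)"
  have finOut: "finite Out" using fin unfolding Out_def out_edges_def by simp
  have finI: "finite I" using fin unfolding I_def inner_edges_def by simp
  have finPP: "finite PP" using finOut unfolding PP_def by simp
  obtain r :: "'e set \<Rightarrow> 'e \<Rightarrow> bool \<Rightarrow> real" where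
    r0: "\<forall>q\<in>PP. \<forall>e\<in>I. \<forall>d. r q e d \<ge> 0"
    and r1: "\<forall>q\<in>PP. \<exists>a b. q = {a, b} \<and> a \<noteq> b \<and>
           (\<forall>v\<in>S. netout I ep (r q) v =
               (if v = inside_end ep S a then 1 / z else 0) -
               (if v = inside_end ep S b then 1 / z else 0))"
    and r2: "\<forall>e\<in>I. (\<Sum>q\<in>PP. r q e True + r q e False) \<le> 34"
    using rf unfolding router_flow_def Let_def Out_def[symmetric] I_def[symmetric]
      PP_def[symmetric] z_def[symmetric] by blast
  obtain A B where AB: "\<forall>q\<in>PP. q = {A q, B q} \<and> A q \<noteq> B q \<and>
           (\<forall>v\<in>S. netout I ep (r q) v =
               (if v = inside_end ep S (A q) then 1 / z else 0) -
               (if v = inside_end ep S (B q) then 1 / z else 0))"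
    using r1 by metis
  define \<kappa> where "\<kappa> p q = w p (B q) - w p (A q)" for p q
  define R where "R p e d = (\<Sum>q\<in>PP. max (\<kappa> p q) 0 * r q e d + max (- \<kappa> p q) 0 * r q e (\<not> d))"
    for p e d
  have R0: "\<forall>p\<in>P. \<forall>e\<in>I. \<forall>d. R p e d \<ge> 0"
    unfolding R_def using r0 by (auto intro!: sum_nonneg)
  have R1: "netout I ep (R p) v = - (\<Sum>e\<in>{e\<in>Out. inside_end ep S e = v}. w p e)"
    if p: "p \<in> P" and v: "v \<in> S" for p v
  proof -
    have phiR: "phi (R p) e = (\<Sum>q\<in>PP. \<kappa> p q * phi (r q) e)" for e
      unfolding phi_def R_def
      by (subst sum_subtractf[symmetric])
         (rule sum.cong[OF refl], simp add: max_neg_diff)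
    have "netout I ep (R p) v = (\<Sum>e\<in>I. \<Sum>q\<in>PP. \<kappa> p q * phi (r q) e * inc ep v e)"
      by (simp add: netout_alt[OF finI] phiR sum_distrib_right)
    also have "\<dots> = (\<Sum>q\<in>PP. \<kappa> p q * netout I ep (r q) v)"
      by (simp add: netout_alt[OF finI] sum.swap[of _ I] sum_distrib_left mult.assoc)
    also have "\<dots> = (\<Sum>q\<in>PP. \<kappa> p q * ((if inside_end ep S (A q) = v then 1 else 0) -
           (if inside_end ep S (B q) = v then 1 else 0))) / z"
      unfolding sum_divide_distrib
      by (rule sum.cong[OF refl]) (use AB v in \<open>auto simp: eq_commute\<close>)
    also have "\<dots> = - z * (\<Sum>x\<in>Out. w p x * (if inside_end ep S x = v then 1 else 0)) / z"
      unfolding \<kappa>_def z_def PP_def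
      by (subst pair_sum[OF finOut]) (use bal p AB in \<open>auto simp: Out_def PP_def\<close>)
    also have "\<dots> = - (\<Sum>e\<in>{e\<in>Out. inside_end ep S e = v}. w p e)"
    proof (cases "Out = {}")
      case True then show ?thesis by simp
    next
      case False then have "z \<noteq> 0" using finOut unfolding z_def by simp
      then show ?thesis using finOut by (simp add: sum.inter_filter if_distrib cong: if_cong)
    qed
    finally show ?thesis .
  qed
  have R2: "(\<Sum>p\<in>P. R p e True + R p e False) \<le> 68 * c" if e: "e \<in> I" for e
  proof -
    have "(\<Sum>p\<in>P. R p e True + R p e False) =
        (\<Sum>p\<in>P. \<Sum>q\<in>PP. \<bar>\<kappa> p q\<bar> * (r q e True + r q e False))"
      unfolding R_def
      by (rule sum.cong[OF refl], subst sum.distrib[symmetric], rule sum.cong[OF refl])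
         (simp add: max_neg_sum)
    also have "\<dots> = (\<Sum>q\<in>PP. (\<Sum>p\<in>P. \<bar>\<kappa> p q\<bar>) * (r q e True + r q e False))"
      by (simp add: sum.swap[of _ P] sum_distrib_right)
    also have "\<dots> \<le> (\<Sum>q\<in>PP. (2 * c) * (r q e True + r q e False))"
    proof (rule sum_mono)
      fix q assume q: "q \<in> PP"
      then have ABq: "A q \<in> Out" "B q \<in> Out" using AB unfolding PP_def by auto
      have "(\<Sum>p\<in>P. \<bar>\<kappa> p q\<bar>) \<le> (\<Sum>p\<in>P. \<bar>w p (B q)\<bar> + \<bar>w p (A q)\<bar>)"
        unfolding \<kappa>_def by (rule sum_mono) simp
      also have "\<dots> \<le> 2 * c"
      proof -
        have "(\<Sum>p\<in>P. \<bar>w p (B q)\<bar>) \<le> c" "(\<Sum>p\<in>P. \<bar>w p (A q)\<bar>) \<le> c"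
          using cap ABq unfolding Out_def by auto
        then show ?thesis by (simp add: sum.distrib)
      qed
      finally have "(\<Sum>p\<in>P. \<bar>\<kappa> p q\<bar>) \<le> 2 * c" .
      moreover have "r q e True + r q e False \<ge> 0" using r0 q e by (simp add: add_nonneg_nonneg)
      ultimately show "(\<Sum>p\<in>P. \<bar>\<kappa> p q\<bar>) * (r q e True + r q e False)
          \<le> (2 * c) * (r q e True + r q e False)" by (rule mult_right_mono)
    qed
    also have "\<dots> = (2 * c) * (\<Sum>q\<in>PP. r q e True + r q e False)"
      by (simp add: sum_distrib_left)
    also have "\<dots> \<le> (2 * c) * 34" using r2 e c0 by (intro mult_left_mono) auto
    finally show ?thesis by simp
  qed
  show ?thesis using R0 R1 R2 unfolding Out_def I_def by blast
qed

lemma cls_mem: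
  assumes pd: "pairwise_disjoint C" and S: "S \<in> C" and v: "v \<in> S"
  shows "cls C v = S"
proof -
  have "(THE S. S \<in> C \<and> v \<in> S) = S"
    by (rule the_equality) (use S v pd in \<open>auto simp: pairwise_disjoint_def\<close>)
  then show ?thesis unfolding cls_def using S v by auto
qed

lemma cls_out: "(\<forall>S\<in>C. v \<notin> S) \<Longrightarrow> cls C v = {v}"
  unfolding cls_def by auto

lemma cls_self: assumes pd: "pairwise_disjoint C" shows "v \<in> cls C v"
proof (cases "\<exists>S\<in>C. v \<in> S")
  case True then obtain S where "S \<in> C" "v \<in> S" by blast
  then show ?thesis using cls_mem[OF pd] by simp
next
  case False then show ?thesis using cls_out[of C v] by auto
qed

lemma cls_iff: "pairwise_disjoint C \<Longrightarrow> S \<in> C \<Longrightarrow> cls C u = S \<longleftrightarrow> u \<in> S"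
  using cls_mem cls_self by metis

lemma cls_single: "pairwise_disjoint C \<Longrightarrow> (\<forall>S\<in>C. v \<notin> S) \<Longrightarrow> cls C u = {v} \<longleftrightarrow> u = v"
  using cls_out cls_self by (metis singletonD)

lemma abs_phi_le: "g e True \<ge> 0 \<Longrightarrow> g e False \<ge> 0 \<Longrightarrow> \<bar>phi g e\<bar> \<le> g e True + g e False"
  unfolding phi_def by simp

lemma routable_uncontract:
  fixes V :: "'v set" and E :: "'e set" and ep :: "'e \<Rightarrow> 'v \<times> 'v"
  assumes mg: "multigraph V E ep" and TV: "T \<subseteq> V" and pd: "pairwise_disjoint C"
    and good: "\<forall>S\<in>C. S \<subseteq> V - T \<and> router_flow 34 E ep S"
    and epH: "\<forall>e\<in>contr_E C E ep. epH e = contr_ep C ep e"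
    and c0: "c \<ge> 0"
    and r: "routable (contr_V C V) (contr_E C E ep) epH T (cls C) D c"
  shows "routable V E ep T id D (68 * c)"
proof -
  define E' where "E' = contr_E C E ep"
  define PT where "PT = {p. p \<subseteq> T \<and> card p = 2}"
  have finV: "finite V" and finE: "finite E" and ends: "\<forall>e\<in>E. fst (ep e) \<in> V \<and> snd (ep e) \<in> V"
    using mg unfolding multigraph_def by auto
  have finT: "finite T" using finV TV finite_subset by blast
  have finPT: "finite PT" using finT unfolding PT_def by simp
  have E'E: "E' \<subseteq> E" unfolding E'_def contr_E_def by auto
  have finE': "finite E'" using finE E'E finite_subset by blast
  have memE': "e \<in> E' \<longleftrightarrow> e \<in> E \<and> cls C (fst (ep e)) \<noteq> cls C (snd (ep e))" for e
    unfolding E'_def contr_E_def by auto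
  obtain h where h0: "\<forall>p\<in>PT. \<forall>e\<in>E'. \<forall>d. h p e d \<ge> 0"
    and h1: "\<forall>p\<in>PT. \<exists>a b. p = {a, b} \<and> a \<noteq> b \<and>
           (\<forall>W\<in>contr_V C V. netout E' epH (h p) W =
               (if W = cls C a then D p else 0) - (if W = cls C b then D p else 0))"
    and h2: "\<forall>e\<in>E'. (\<Sum>p\<in>PT. h p e True + h p e False) \<le> c"
    using r unfolding routable_def Let_def E'_def[symmetric] PT_def[symmetric] by blast
  have incH: "inc epH W e = (if cls C (fst (ep e)) = W then 1 else 0) - (if cls C (snd (ep e)) = W then 1 else 0)"
    if "e \<in> E'" for e W
    using epH that unfolding E'_def inc_def contr_ep_def by auto
  have TnC: "t \<notin> S" if "t \<in> T" "S \<in> C" for t S using good that by auto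
  define \<sigma> where "\<sigma> S e = (if fst (ep e) \<in> S then 1 else -1 :: real)" for S e
  define w where "w S p e = phi (h p) e * \<sigma> S e" for S p e
  have OutE': "out_edges E ep S \<subseteq> E'" if S: "S \<in> C" for S
  proof
    fix e assume "e \<in> out_edges E ep S"
    then have "e \<in> E" "(fst (ep e) \<in> S) \<noteq> (snd (ep e) \<in> S)" unfolding out_edges_def by auto
    then show "e \<in> E'" using cls_iff[OF pd S] memE' by metis
  qed
  have bal: "\<forall>p\<in>PT. (\<Sum>e\<in>out_edges E ep S. w S p e) = 0" if S: "S \<in> C" for S
  proof
    fix p assume p: "p \<in> PT"
    show "(\<Sum>e\<in>out_edges E ep S. w S p e) = 0"
    proof (cases "S = {}")
      case True then show ?thesis unfolding out_edges_def by simp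
    next
      case False
      then obtain v where v: "v \<in> S" by blast
      have SV: "S \<in> contr_V C V" unfolding contr_V_def
        using cls_mem[OF pd S v] good S v by (auto intro!: image_eqI[of _ _ v])
      obtain a b where ab: "p = {a, b}" and
        nH: "netout E' epH (h p) S = (if S = cls C a then D p else 0) - (if S = cls C b then D p else 0)"
        using h1 p SV by blast
      have abT: "a \<in> T" "b \<in> T" using p ab unfolding PT_def by auto
      have "cls C a \<noteq> S" "cls C b \<noteq> S" using cls_iff[OF pd S] TnC[OF _ S] abT by auto
      then have "netout E' epH (h p) S = 0" using nH by auto
      moreover have "netout E' epH (h p) S = (\<Sum>e\<in>E'. phi (h p) e * inc epH S e)"
        by (rule netout_alt[OF finE'])
      moreover have "\<dots> = (\<Sum>e\<in>out_edges E ep S. phi (h p) e * inc epH S e)"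
        by (rule sum.mono_neutral_right[OF finE' OutE'[OF S]])
           (auto simp: incH cls_iff[OF pd S] out_edges_def memE')
      moreover have "\<dots> = (\<Sum>e\<in>out_edges E ep S. w S p e)"
        by (rule sum.cong[OF refl])
           (use OutE'[OF S] in \<open>auto simp: incH cls_iff[OF pd S] out_edges_def w_def \<sigma>_def\<close>)
      ultimately show ?thesis by simp
    qed
  qed
  have cap: "\<forall>e\<in>out_edges E ep S. (\<Sum>p\<in>PT. \<bar>w S p e\<bar>) \<le> c" if S: "S \<in> C" for S
  proof
    fix e assume e: "e \<in> out_edges E ep S"
    then have eE': "e \<in> E'" using OutE'[OF S] by auto
    have "(\<Sum>p\<in>PT. \<bar>w S p e\<bar>) \<le> (\<Sum>p\<in>PT. h p e True + h p e False)"
      by (rule sum_mono) (use h0 eE' in \<open>auto simp: w_def \<sigma>_def intro!: abs_phi_le\<close>)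
    also have "\<dots> \<le> c" using h2 eE' by auto
    finally show "(\<Sum>p\<in>PT. \<bar>w S p e\<bar>) \<le> c" .
  qed
  have ex: "\<forall>S\<in>C. \<exists>R :: 'v set \<Rightarrow> 'e \<Rightarrow> bool \<Rightarrow> real.
     (\<forall>p\<in>PT. \<forall>e\<in>inner_edges E ep S. \<forall>d. R p e d \<ge> 0) \<and>
     (\<forall>p\<in>PT. \<forall>v\<in>S. netout (inner_edges E ep S) ep (R p) v =
          - (\<Sum>e\<in>{e\<in>out_edges E ep S. inside_end ep S e = v}. w S p e)) \<and>
     (\<forall>e\<in>inner_edges E ep S. (\<Sum>p\<in>PT. R p e True + R p e False) \<le> 68 * c)"
  proof
    fix S assume S: "S \<in> C"
    show "\<exists>R :: 'v set \<Rightarrow> 'e \<Rightarrow> bool \<Rightarrow> real.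
     (\<forall>p\<in>PT. \<forall>e\<in>inner_edges E ep S. \<forall>d. R p e d \<ge> 0) \<and>
     (\<forall>p\<in>PT. \<forall>v\<in>S. netout (inner_edges E ep S) ep (R p) v =
          - (\<Sum>e\<in>{e\<in>out_edges E ep S. inside_end ep S e = v}. w S p e)) \<and>
     (\<forall>e\<in>inner_edges E ep S. (\<Sum>p\<in>PT. R p e True + R p e False) \<le> 68 * c)"
      by (rule router_reroute[OF finE finPT _ c0 bal[OF S] cap[OF S]]) (use good S in auto)
  qed
  obtain RR where RR: "\<forall>S\<in>C.
     (\<forall>p\<in>PT. \<forall>e\<in>inner_edges E ep S. \<forall>d. RR S p e d \<ge> 0) \<and>
     (\<forall>p\<in>PT. \<forall>v\<in>S. netout (inner_edges E ep S) ep (RR S p) v =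
          - (\<Sum>e\<in>{e\<in>out_edges E ep S. inside_end ep S e = v}. w S p e)) \<and>
     (\<forall>e\<in>inner_edges E ep S. (\<Sum>p\<in>PT. RR S p e True + RR S p e False) \<le> 68 * c)"
    using bchoice[OF ex] by blast
  define g where "g p e d = (if e \<in> E' then h p e d
      else if (\<exists>S\<in>C. e \<in> inner_edges E ep S) then RR (THE S. S \<in> C \<and> e \<in> inner_edges E ep S) p e d
      else 0)" for p e d
  have inI: "g p e d = RR S p e d" "e \<notin> E'" if S: "S \<in> C" and e: "e \<in> inner_edges E ep S" for S p e d
  proof -
    have fs: "fst (ep e) \<in> S" "snd (ep e) \<in> S" "e \<in> E" using e unfolding inner_edges_def by auto
    then show ne: "e \<notin> E'" using memE' cls_mem[OF pd S] by auto
    have "(THE S. S \<in> C \<and> e \<in> inner_edges E ep S) = S"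
      by (rule the_equality) (use S e fs pd in \<open>auto simp: inner_edges_def pairwise_disjoint_def\<close>)
    then show "g p e d = RR S p e d" unfolding g_def using ne S e by auto
  qed
  have g0: "\<forall>p\<in>PT. \<forall>e\<in>E. \<forall>d. g p e d \<ge> 0"
  proof (intro ballI allI)
    fix p e d assume p: "p \<in> PT" and e: "e \<in> E"
    show "g p e d \<ge> 0"
    proof (cases "e \<in> E'")
      case True then show ?thesis using h0 p by (auto simp: g_def)
    next
      case False
      show ?thesis
      proof (cases "\<exists>S\<in>C. e \<in> inner_edges E ep S")
        case True then obtain S where S: "S \<in> C" "e \<in> inner_edges E ep S" by blast
        then show ?thesis using inI(1)[OF S] RR p by auto
      next
        case False then show ?thesis using \<open>e \<notin> E'\<close> by (auto simp: g_def)
      qed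
    qed
  qed
  have g2: "\<forall>e\<in>E. (\<Sum>p\<in>PT. g p e True + g p e False) \<le> 68 * c"
  proof
    fix e assume e: "e \<in> E"
    show "(\<Sum>p\<in>PT. g p e True + g p e False) \<le> 68 * c"
    proof (cases "e \<in> E'")
      case True then show ?thesis using h2 c0 by (auto simp: g_def)
    next
      case False
      show ?thesis
      proof (cases "\<exists>S\<in>C. e \<in> inner_edges E ep S")
        case True then obtain S where S: "S \<in> C" "e \<in> inner_edges E ep S" by blast
        then show ?thesis using inI(1)[OF S] RR by auto
      next
        case False then show ?thesis using \<open>e \<notin> E'\<close> c0 by (auto simp: g_def)
      qed
    qed
  qed
  have g1: "\<forall>p\<in>PT. \<exists>a b. p = {a, b} \<and> a \<noteq> b \<and>
           (\<forall>v\<in>V. netout E ep (g p) v =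
               (if v = id a then D p else 0) - (if v = id b then D p else 0))"
  proof
    fix p assume p: "p \<in> PT"
    obtain a b where ab: "p = {a, b}" "a \<noteq> b" and
      nH: "\<forall>W\<in>contr_V C V. netout E' epH (h p) W =
               (if W = cls C a then D p else 0) - (if W = cls C b then D p else 0)"
      using h1 p by blast
    have abT: "a \<in> T" "b \<in> T" using p ab unfolding PT_def by auto
    have "netout E ep (g p) v = (if v = a then D p else 0) - (if v = b then D p else 0)"
      if v: "v \<in> V" for v
    proof (cases "\<exists>S\<in>C. v \<in> S")
      case True
      then obtain S where S: "S \<in> C" and vS: "v \<in> S" by blast
      have nab: "v \<noteq> a" "v \<noteq> b" using TnC[OF _ S] abT vS by auto
      let ?I = "inner_edges E ep S" and ?O = "{e\<in>out_edges E ep S. inside_end ep S e = v}"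
      have IE: "?I \<subseteq> E - E'" using inI(2)[OF S] unfolding inner_edges_def by auto
      have finEE: "finite (E - E')" using finE by simp
      have "netout E ep (g p) v = (\<Sum>e\<in>E'. phi (g p) e * inc ep v e) + (\<Sum>e\<in>E-E'. phi (g p) e * inc ep v e)"
        unfolding netout_alt[OF finE] sum.subset_diff[OF E'E finE] by (rule add.commute)
      moreover have "(\<Sum>e\<in>E-E'. phi (g p) e * inc ep v e) = (\<Sum>e\<in>?I. phi (g p) e * inc ep v e)"
      proof (rule sum.mono_neutral_right[OF finEE IE], rule ballI)
        fix e assume e: "e \<in> E - E' - ?I"
        then have eq: "cls C (fst (ep e)) = cls C (snd (ep e))" "e \<in> E" using memE' by auto
        have "fst (ep e) \<noteq> v \<and> snd (ep e) \<noteq> v"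
        proof
          show "fst (ep e) \<noteq> v"
          proof
            assume "fst (ep e) = v"
            then have "snd (ep e) \<in> S" using eq cls_iff[OF pd S] vS by metis
            then show False using e \<open>fst (ep e) = v\<close> vS unfolding inner_edges_def by auto
          qed
          show "snd (ep e) \<noteq> v"
          proof
            assume "snd (ep e) = v"
            then have "fst (ep e) \<in> S" using eq cls_iff[OF pd S] vS by metis
            then show False using e \<open>snd (ep e) = v\<close> vS unfolding inner_edges_def by auto
          qed
        qed
        then show "phi (g p) e * inc ep v e = 0" by (simp add: inc_def)
      qed
      moreover have "(\<Sum>e\<in>?I. phi (g p) e * inc ep v e) = netout ?I ep (RR S p) v"
        using finE by (simp add: netout_alt inner_edges_def phi_def inI(1)[OF S])
      moreover have "\<dots> = - (\<Sum>e\<in>?O. w S p e)" using RR S p vS by auto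
      moreover have "(\<Sum>e\<in>E'. phi (g p) e * inc ep v e) = (\<Sum>e\<in>?O. w S p e)"
      proof -
        have OE: "?O \<subseteq> E'" using OutE'[OF S] by auto
        have "(\<Sum>e\<in>E'. phi (g p) e * inc ep v e) = (\<Sum>e\<in>?O. phi (g p) e * inc ep v e)"
        proof (rule sum.mono_neutral_right[OF finE' OE, symmetric, symmetric], rule ballI)
          fix e assume e: "e \<in> E' - ?O"
          then have ne: "cls C (fst (ep e)) \<noteq> cls C (snd (ep e))" "e \<in> E" using memE' by auto
          show "phi (g p) e * inc ep v e = 0"
          proof (cases "fst (ep e) = v \<or> snd (ep e) = v")
            case True
            then have "e \<in> ?O" using ne cls_iff[OF pd S] vS
              unfolding out_edges_def inside_end_def by auto
            then show ?thesis using e by auto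
          next
            case False then show ?thesis by (simp add: inc_def)
          qed
        qed
        also have "\<dots> = (\<Sum>e\<in>?O. w S p e)"
        proof (rule sum.cong[OF refl])
          fix e assume e: "e \<in> ?O"
          then have eE': "e \<in> E'" using OE by auto
          have "inc ep v e = \<sigma> S e"
            using e vS unfolding out_edges_def inside_end_def inc_def \<sigma>_def by (auto split: if_splits)
          then show "phi (g p) e * inc ep v e = w S p e"
            using eE' by (simp add: w_def phi_def g_def)
        qed
        finally show ?thesis .
      qed
      ultimately show ?thesis using nab by simp
    next
      case False0: False
      then have False: "\<forall>S\<in>C. v \<notin> S" by blast
      have vV': "{v} \<in> contr_V C V" unfolding contr_V_def
        using cls_out[OF False] v by (auto intro!: image_eqI[of _ _ v])
      have "netout E ep (g p) v = (\<Sum>e\<in>E'. phi (g p) e * inc ep v e)"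
        unfolding netout_alt[OF finE]
      proof (rule sum.mono_neutral_right[OF finE E'E, symmetric, symmetric], rule ballI)
        fix e assume e: "e \<in> E - E'"
        then have eq: "cls C (fst (ep e)) = cls C (snd (ep e))" using memE' by auto
        have "fst (ep e) = v \<longleftrightarrow> snd (ep e) = v"
          using eq cls_single[OF pd False] by metis
        then show "phi (g p) e * inc ep v e = 0" by (simp add: inc_def)
      qed
      also have "\<dots> = (\<Sum>e\<in>E'. phi (h p) e * inc epH {v} e)"
      proof (rule sum.cong[OF refl])
        fix e assume e: "e \<in> E'"
        show "phi (g p) e * inc ep v e = phi (h p) e * inc epH {v} e"
          unfolding incH[OF e] using e by (simp add: inc_def cls_single[OF pd False] g_def phi_def)
      qed
      also have "\<dots> = netout E' epH (h p) {v}" by (rule netout_alt[OF finE', symmetric])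
      also have "\<dots> = (if v = a then D p else 0) - (if v = b then D p else 0)"
        using nH vV' cls_single[OF pd False] by (auto simp: eq_commute)
      finally show ?thesis .
    qed
    then show "\<exists>a b. p = {a, b} \<and> a \<noteq> b \<and>
           (\<forall>v\<in>V. netout E ep (g p) v =
               (if v = id a then D p else 0) - (if v = id b then D p else 0))"
      using ab by (intro exI[of _ a] exI[of _ b]) simp
  qed
  show ?thesis unfolding routable_def Let_def PT_def[symmetric]
    using g0 g1 g2 by blast
qed

lemma ennreal_68_trick:
  fixes X Y :: ennreal
  assumes "\<And>c. c \<in> A \<Longrightarrow> X \<le> ennreal (68 * c)" and "\<And>c. c \<in> A \<Longrightarrow> c \<ge> 0"
  shows "X \<le> 68 * (INF c \<in> A. ennreal c)"
proof -
  have n: "(68::ennreal) \<noteq> 0" "(68::ennreal) \<noteq> top" by simp_all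
  have "X / 68 \<le> (INF c \<in> A. ennreal c)"
  proof (rule INF_greatest)
    fix c assume c: "c \<in> A"
    have "X \<le> ennreal c * 68" using assms c by (simp add: ennreal_mult' mult.commute)
    then have "X / 68 \<le> ennreal c * 68 / 68" by (rule divide_right_mono_ennreal)
    also have "\<dots> = ennreal c" using n by (rule mult_divide_eq_ennreal)
    finally show "X / 68 \<le> ennreal c" .
  qed
  then have "X / 68 * 68 \<le> (INF c \<in> A. ennreal c) * 68" by (rule mult_right_mono) simp
  moreover have "X / 68 * 68 = X"
    using mult_divide_eq_ennreal[OF n, of 1] by (simp add: ennreal_divide_times)
  ultimately show ?thesis by (simp add: mult.commute)
qed

theorem claim1:
  fixes V :: "'v set" and E :: "'e set" and ep :: "'e \<Rightarrow> 'v \<times> 'v" and T :: "'v set"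
    and V' :: "'v set set" and E' :: "'e set" and ep' :: "'e \<Rightarrow> 'v set \<times> 'v set"
  assumes "multigraph V E ep"
    and "T \<subseteq> V"
    and "legal_contracted V E ep T V' E' ep'"
  shows "restricted_flow_sparsifier V E ep T V' E' ep' 68"
proof -
  note mg = assms(1) and TV = assms(2)
  obtain C where pd: "pairwise_disjoint C" and good: "\<forall>S\<in>C. good_router V E ep T S"
    and V'd: "V' = contr_V C V" and E'd: "E' = contr_E C E ep"
    and epH: "\<forall>e\<in>E'. ep' e = contr_ep C ep e"
    using assms(3) unfolding legal_contracted_def by blast
  have good': "\<forall>S\<in>C. S \<subseteq> V - T \<and> router_flow 34 E ep S"
    using good unfolding good_router_def by blast
  have finV: "finite V" and finE: "finite E" and ends: "\<forall>e\<in>E. fst (ep e) \<in> V \<and> snd (ep e) \<in> V"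
    using mg unfolding multigraph_def by auto
  have E'E: "E' \<subseteq> E" unfolding E'd contr_E_def by auto
  have loops: "\<forall>e\<in>E-E'. cls C (fst (ep e)) = cls C (snd (ep e))" unfolding E'd contr_E_def by auto
  have epH2: "\<forall>e\<in>E'. ep' e = (cls C (fst (ep e)), cls C (snd (ep e)))"
    using epH unfolding contr_ep_def by auto
  have TnC: "\<forall>S\<in>C. t \<notin> S" if "t \<in> T" for t using good' that by auto
  have inj: "inj_on (cls C) T"
  proof (rule inj_onI)
    fix x y assume "x \<in> T" "y \<in> T" "cls C x = cls C y"
    then show "x = y" using cls_out[OF TnC] by (metis singleton_inject)
  qed
  have img: "cls C ` T \<subseteq> V'" unfolding V'd contr_V_def using TV by auto
  have eta: "eta V' E' ep' T (cls C) D \<le> eta V E ep T id D \<and>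
        eta V E ep T id D \<le> 68 * eta V' E' ep' T (cls C) D" for D
  proof
    have sub: "{c. c \<ge> 0 \<and> routable V E ep T id D c} \<subseteq> {c. c \<ge> 0 \<and> routable V' E' ep' T (cls C) D c}"
      using routable_contract[OF finE ends E'E loops epH2 finV TV] unfolding V'd contr_V_def by blast
    show "eta V' E' ep' T (cls C) D \<le> eta V E ep T id D"
      unfolding eta_def by (rule INF_superset_mono[OF sub order_refl])
    show "eta V E ep T id D \<le> 68 * eta V' E' ep' T (cls C) D"
      unfolding eta_def[of V' E' ep' T "cls C" D]
    proof (rule ennreal_68_trick)
      fix c assume c: "c \<in> {c. c \<ge> 0 \<and> routable V' E' ep' T (cls C) D c}"
      then have "routable V E ep T id D (68 * c)"
        using routable_uncontract[OF mg TV pd good'] epH unfolding V'd E'd by blast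
      then have "68 * c \<in> {c. c \<ge> 0 \<and> routable V E ep T id D c}" using c by auto
      then show "eta V E ep T id D \<le> ennreal (68 * c)"
        unfolding eta_def by (rule INF_lower)
    qed auto
  qed
  show ?thesis
    unfolding restricted_flow_sparsifier_def flow_sparsifier_def
    using pd good' V'd E'd epH inj img eta by blast
qed

end
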